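(* If two gyrochords $A_1A_2$ and $B_1B_2$ of a gyrocircle in the Einstein gyrovector space $\mathbb{R}^n_s$ intersect at a point $P$, then $$\frac{\gamma_{|PA_1|}|PA_1|\,\gamma_{|PA_2|}|PA_2|}{\gamma_{|A_1A_2|}+1}=\frac{\gamma_{|PB_1|}|PB_1|\,\gamma_{|PB_2|}|PB_2|}{\gamma_{|B_1B_2|}+1},$$ where $|XY|=\|\ominus X\oplus Y\|$ denotes gyrodistance and $\gamma_a=(1-a^2/s^2)^{-1/2}$.
   Context: Fix $s>0$, $n\ge2$; $\mathbb{R}^n_s=\{v\in\mathbb{R}^n:\|v\|<s\}$ with Einstein addition $u\oplus v=\frac{1}{1+u\cdot v/s^2}\{u+\frac{1}{\gamma_u}v+\frac{1}{s^2}\frac{\gamma_u}{1+\gamma_u}(u\cdot v)u\}$, $\gamma_v=(1-\|v\|^2/s^2)^{-1/2}$, $\ominus v=-v$. Gyrosegments are Euclidean segments with endpoints in the ball. A gyroplane is $(A_1\oplus\mathrm{span}\{\ominus A_1\oplus A_2,\ominus A_1\oplus A_3\})\cap\mathbb{R}^n_s$ for $\ominus A_1\oplus A_2,\ominus A_1\oplus A_3$ linearly independent; a gyrocircle with gyrocenter $O$ and gyroradius $r>0$ is the set of points of a gyroplane containing $O$ at gyrodistance $r$ from $O$. A gyrochord is a gyrosegment whose two endpoints lie on the gyrocircle. *)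

theory Defs
  imports "HOL-Analysis.Analysis"
begin

definition gam :: "real \<Rightarrow> real \<Rightarrow> real" where
  "gam s a = 1 / sqrt (1 - a\<^sup>2 / s\<^sup>2)"

definition eadd :: "real \<Rightarrow> 'a::real_inner \<Rightarrow> 'a \<Rightarrow> 'a" where
  "eadd s u v = (1 / (1 + (u \<bullet> v) / s\<^sup>2)) *\<^sub>R
     (u + (1 / gam s (norm u)) *\<^sub>R v
        + ((1 / s\<^sup>2) * (gam s (norm u) / (1 + gam s (norm u))) * (u \<bullet> v)) *\<^sub>R u)"

definition gyrodist :: "real \<Rightarrow> 'a::real_inner \<Rightarrow> 'a \<Rightarrow> real" where
  "gyrodist s X Y = norm (eadd s (- X) Y)"

definition gyroplane :: "real \<Rightarrow> 'a::real_inner \<Rightarrow> 'a \<Rightarrow> 'a \<Rightarrow> 'a set" where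
  "gyroplane s A1 A2 A3 =
     {eadd s A1 w | w. w \<in> span {eadd s (- A1) A2, eadd s (- A1) A3}} \<inter> ball 0 s"

definition is_gyroplane :: "real \<Rightarrow> 'a::real_inner set \<Rightarrow> bool" where
  "is_gyroplane s S \<longleftrightarrow> (\<exists>A1 A2 A3. A1 \<in> ball 0 s \<and> A2 \<in> ball 0 s \<and> A3 \<in> ball 0 s \<and>
      eadd s (- A1) A2 \<noteq> eadd s (- A1) A3 \<and>
      independent {eadd s (- A1) A2, eadd s (- A1) A3} \<and>
      S = gyroplane s A1 A2 A3)"

definition gyrocircle :: "real \<Rightarrow> 'a::real_inner set \<Rightarrow> 'a \<Rightarrow> real \<Rightarrow> 'a set" where
  "gyrocircle s S C r = {X \<in> S. gyrodist s C X = r}"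

end

theory Submission
  imports Defs
begin

lemma inner_abs_lt:
  fixes u v :: "'a::real_inner"
  assumes "norm u < s" "norm v < s"
  shows "\<bar>u \<bullet> v\<bar> < s\<^sup>2"
proof -
  have "\<bar>u \<bullet> v\<bar> \<le> norm u * norm v" by (rule Cauchy_Schwarz_ineq2)
  also have "\<dots> < s * s" using assms by (metis abs_ge_zero abs_norm_cancel mult_strict_mono' norm_ge_zero order.strict_trans1 order.strict_trans2 mult_strict_mono)
  finally show ?thesis by (simp add: power2_eq_square)
qed

lemma eadd_norm:
  fixes u v :: "'a::real_inner"
  assumes s: "s > 0" and u: "norm u < s" and v: "norm v < s"
  shows "1 - (norm (eadd s u v))\<^sup>2 / s\<^sup>2 =
     (1 - (norm u)\<^sup>2/s\<^sup>2) * (1 - (norm v)\<^sup>2/s\<^sup>2) / (1 + (u \<bullet> v)/s\<^sup>2)\<^sup>2"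
proof -
  define x where "x = (norm u)\<^sup>2"
  define y where "y = (norm v)\<^sup>2"
  define z where "z = u \<bullet> v"
  define e where "e = sqrt (1 - x/s\<^sup>2)"
  have xs: "x < s\<^sup>2" unfolding x_def using u by (simp add: power_strict_mono)
  have s2: "s\<^sup>2 > 0" using s by simp
  have "1 - x/s\<^sup>2 > 0" using xs s2 by (simp add: field_simps)
  hence e0: "e > 0" and ee: "e\<^sup>2 = 1 - x/s\<^sup>2" unfolding e_def by auto
  have g: "gam s (norm u) = 1/e" unfolding gam_def e_def x_def by simp
  have zz: "\<bar>z\<bar> < s\<^sup>2" unfolding z_def using inner_abs_lt u v by blast
  define D where "D = 1 + z/s\<^sup>2"
  have D0: "D > 0" unfolding D_def using zz s2 by (simp add: field_simps abs_less_iff)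
  define a where "a = 1 + z/(s\<^sup>2*(1+e))"
  have ea: "eadd s u v = (1/D) *\<^sub>R (a *\<^sub>R u + e *\<^sub>R v)"
  proof -
    have c: "(1 / s\<^sup>2) * ((1/e) / (1 + 1/e)) * z = z/(s\<^sup>2*(1+e))"
      using e0 by (simp add: field_simps)
    have "eadd s u v = (1/D) *\<^sub>R (u + e *\<^sub>R v + (z/(s\<^sup>2*(1+e))) *\<^sub>R u)"
      unfolding eadd_def g D_def z_def[symmetric] c[symmetric] by simp
    also have "\<dots> = (1/D) *\<^sub>R (a *\<^sub>R u + e *\<^sub>R v)"
      unfolding a_def by (simp add: scaleR_add_left)
    finally show ?thesis .
  qed
  have n: "(norm (eadd s u v))\<^sup>2 = (a\<^sup>2*x + 2*a*e*z + e\<^sup>2*y)/D\<^sup>2"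
    unfolding ea power2_norm_eq_inner x_def y_def z_def
    by (simp add: inner_add_left inner_add_right power2_eq_square algebra_simps inner_commute power_divide add_divide_distrib)
  define w where "w = z/s\<^sup>2"
  define Y where "Y = y/s\<^sup>2"
  have zw: "z = s\<^sup>2*w" and yY: "y = s\<^sup>2*Y" unfolding w_def Y_def using s2 by auto
  have xx: "x = s\<^sup>2*(1-e\<^sup>2)" using ee s2 by (simp add: field_simps)
  have aa: "a = (1+e+w)/(1+e)" proof -
    have "s\<^sup>2*(1+e) > 0" using e0 s2 by simp
    thus ?thesis unfolding a_def w_def using e0 s2 by (simp add: field_simps)
  qed
  have DD: "D = 1 + w" unfolding D_def w_def ..
  have key: "(1+w)\<^sup>2 - (((1+e+w)/(1+e))\<^sup>2*(1-e\<^sup>2) + 2*((1+e+w)/(1+e))*e*w + e\<^sup>2*Y) = e\<^sup>2*(1-Y)"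
  proof -
    define q where "q = (1+e+w)/(1+e)"
    have wq: "w = q*(1+e) - 1 - e" unfolding q_def using e0 by (simp add: field_simps)
    have "(1+(q*(1+e) - 1 - e))\<^sup>2 - (q\<^sup>2*(1-e\<^sup>2) + 2*q*e*(q*(1+e) - 1 - e) + e\<^sup>2*Y) = e\<^sup>2*(1-Y)"
      by (simp add: power2_eq_square algebra_simps)
    hence "(1+w)\<^sup>2 - (q\<^sup>2*(1-e\<^sup>2) + 2*q*e*w + e\<^sup>2*Y) = e\<^sup>2*(1-Y)"
      using wq by simp
    thus ?thesis unfolding q_def .
  qed
  have st: "(a\<^sup>2*x + 2*a*e*z + e\<^sup>2*y)/s\<^sup>2 = a\<^sup>2*(1-e\<^sup>2) + 2*a*e*w + e\<^sup>2*Y"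
    unfolding xx zw yY using s2 by (simp add: field_simps)
  have "(norm (eadd s u v))\<^sup>2 / s\<^sup>2 = (a\<^sup>2*(1-e\<^sup>2) + 2*a*e*w + e\<^sup>2*Y)/D\<^sup>2"
    unfolding n using st by (metis divide_divide_eq_left mult.commute)
  hence "1 - (norm (eadd s u v))\<^sup>2 / s\<^sup>2 = (D\<^sup>2 - (a\<^sup>2*(1-e\<^sup>2) + 2*a*e*w + e\<^sup>2*Y))/D\<^sup>2"
    using D0 by (simp add: field_simps)
  also have "\<dots> = ((1+w)\<^sup>2 - (((1+e+w)/(1+e))\<^sup>2*(1-e\<^sup>2) + 2*((1+e+w)/(1+e))*e*w + e\<^sup>2*Y))/D\<^sup>2"
    unfolding aa DD ..
  also have "\<dots> = e\<^sup>2*(1-Y)/D\<^sup>2" using key by simp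
  also have "\<dots> = (1 - (norm u)\<^sup>2/s\<^sup>2) * (1 - (norm v)\<^sup>2/s\<^sup>2) / (1 + (u \<bullet> v)/s\<^sup>2)\<^sup>2"
    using ee unfolding Y_def y_def x_def D_def z_def by simp
  finally show ?thesis .
qed

definition Bf :: "real \<Rightarrow> 'a::real_inner \<Rightarrow> 'a \<Rightarrow> real" where
  "Bf s X Y = gam s (norm X) * gam s (norm Y) * (1 - (X \<bullet> Y)/s\<^sup>2)"

lemma gam_pos:
  assumes "s > 0" "0 \<le> d" "d < s"
  shows "gam s d \<ge> 1"
proof -
  have "d\<^sup>2 < s\<^sup>2" using assms by (simp add: power_strict_mono)
  hence h: "0 < 1 - d\<^sup>2/s\<^sup>2" "1 - d\<^sup>2/s\<^sup>2 \<le> 1" using assms by (auto simp: field_simps)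
  hence "sqrt (1 - d\<^sup>2/s\<^sup>2) \<le> 1" "sqrt (1 - d\<^sup>2/s\<^sup>2) > 0" by auto
  thus ?thesis unfolding gam_def by (simp add: field_simps)
qed

lemma gam_sq:
  assumes "s > 0" "0 \<le> d" "d < s"
  shows "(gam s d)\<^sup>2 * (1 - d\<^sup>2/s\<^sup>2) = 1"
proof -
  have "d\<^sup>2 < s\<^sup>2" using assms by (simp add: power_strict_mono)
  hence h: "0 < 1 - d\<^sup>2/s\<^sup>2" using assms by (auto simp: field_simps)
  define X where "X = 1 - d\<^sup>2/s\<^sup>2"
  have X: "X > 0" using h X_def by simp
  have "(sqrt X)\<^sup>2 = X" using X by simp
  hence "(gam s d)\<^sup>2 = 1/X" unfolding gam_def X_def[symmetric] by (simp add: power_divide)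
  hence "(gam s d)\<^sup>2 * X = 1" using X by simp
  thus ?thesis unfolding X_def .
qed

lemma gyro_gam:
  fixes u v :: "'a::real_inner"
  assumes s: "s > 0" and u: "norm u < s" and v: "norm v < s"
  shows "gyrodist s u v < s" "gam s (gyrodist s u v) = Bf s u v"
proof -
  define d where "d = gyrodist s u v"
  have n: "norm (-u) < s" using u by simp
  have e: "1 - d\<^sup>2/s\<^sup>2 = (1 - (norm u)\<^sup>2/s\<^sup>2) * (1 - (norm v)\<^sup>2/s\<^sup>2) / (1 - (u \<bullet> v)/s\<^sup>2)\<^sup>2"
    using eadd_norm[OF s n v] unfolding d_def gyrodist_def by simp
  have s2: "s\<^sup>2 > 0" using s by simp
  have eu: "1 - (norm u)\<^sup>2/s\<^sup>2 > 0" using u s s2 by (simp add: field_simps power_strict_mono)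
  have ev: "1 - (norm v)\<^sup>2/s\<^sup>2 > 0" using v s s2 by (simp add: field_simps power_strict_mono)
  have zz: "\<bar>u \<bullet> v\<bar> < s\<^sup>2" using inner_abs_lt u v by blast
  have D: "1 - (u \<bullet> v)/s\<^sup>2 > 0" using zz s2 by (simp add: field_simps abs_less_iff)
  have pos: "1 - d\<^sup>2/s\<^sup>2 > 0" unfolding e by (rule divide_pos_pos[OF mult_pos_pos[OF eu ev] zero_less_power[OF D]])
  hence "d\<^sup>2 < s\<^sup>2" using s2 by (simp add: field_simps)
  moreover have "d \<ge> 0" unfolding d_def gyrodist_def by simp
  ultimately show "gyrodist s u v < s" unfolding d_def[symmetric] using s
    by (meson power_less_imp_less_base less_imp_le)
  have "sqrt (1 - d\<^sup>2/s\<^sup>2) = sqrt (1 - (norm u)\<^sup>2/s\<^sup>2) * sqrt (1 - (norm v)\<^sup>2/s\<^sup>2) / (1 - (u \<bullet> v)/s\<^sup>2)"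
    unfolding e using D by (simp add: real_sqrt_mult real_sqrt_divide)
  thus "gam s (gyrodist s u v) = Bf s u v"
    unfolding d_def[symmetric] Bf_def gam_def using D eu ev by (simp add: field_simps)
qed

lemma gam_times:
  assumes "s > 0" "0 \<le> d" "d < s"
  shows "gam s d * d = s * sqrt ((gam s d)\<^sup>2 - 1)"
proof -
  have g: "(gam s d)\<^sup>2 * (1 - d\<^sup>2/s\<^sup>2) = 1" by (rule gam_sq[OF assms])
  have g1: "gam s d \<ge> 1" by (rule gam_pos[OF assms])
  have "(gam s d * d / s)\<^sup>2 = (gam s d)\<^sup>2 - 1"
  proof -
    have "(gam s d * d / s)\<^sup>2 = (gam s d)\<^sup>2 - (gam s d)\<^sup>2 * (1 - d\<^sup>2/s\<^sup>2)"
      using assms by (simp add: field_simps power2_eq_square)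
    thus ?thesis using g by simp
  qed
  moreover have "gam s d * d / s \<ge> 0" using assms g1 by simp
  ultimately have "sqrt ((gam s d)\<^sup>2 - 1) = gam s d * d / s" by (metis real_sqrt_abs abs_of_nonneg)
  thus ?thesis using assms by simp
qed


lemma G_pos:
  fixes X :: "'a::real_inner"
  assumes "s > 0" "norm X < s" shows "gam s (norm X) \<ge> 1"
  using gam_pos[OF assms(1) norm_ge_zero assms(2)] .

lemma Bf_self:
  fixes X :: "'a::real_inner"
  assumes "s > 0" "norm X < s" shows "Bf s X X = 1"
  using gam_sq[OF assms(1) norm_ge_zero assms(2)] unfolding Bf_def
  by (simp add: power2_norm_eq_inner[symmetric] power2_eq_square)

lemma Bf_ge1:
  fixes X Y :: "'a::real_inner"
  assumes "s > 0" "norm X < s" "norm Y < s" shows "Bf s X Y \<ge> 1"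
  using gyro_gam[OF assms] gam_pos[OF assms(1), of "gyrodist s X Y"] unfolding gyrodist_def by simp

lemma Bf_lin:
  fixes A1 A2 Y :: "'a::real_inner"
  assumes s: "s > 0" and a1: "norm A1 < s" and a2: "norm A2 < s"
  shows "Bf s ((1-t) *\<^sub>R A1 + t *\<^sub>R A2) Y = gam s (norm ((1-t) *\<^sub>R A1 + t *\<^sub>R A2)) *
     ((1-t)/gam s (norm A1) * Bf s A1 Y + t/gam s (norm A2) * Bf s A2 Y)"
proof -
  have g1: "gam s (norm A1) \<noteq> 0" using G_pos[OF s a1] by simp
  have g2: "gam s (norm A2) \<noteq> 0" using G_pos[OF s a2] by simp
  have eq: "1 - ((1-t) *\<^sub>R A1 + t *\<^sub>R A2) \<bullet> Y / s\<^sup>2 = (1-t)*(1 - A1 \<bullet> Y/s\<^sup>2) + t*(1 - A2 \<bullet> Y/s\<^sup>2)"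
    by (simp add: inner_add_left algebra_simps add_divide_distrib diff_divide_distrib)
  have "Bf s ((1-t) *\<^sub>R A1 + t *\<^sub>R A2) Y = gam s (norm ((1-t) *\<^sub>R A1 + t *\<^sub>R A2)) * gam s (norm Y) *
     ((1-t)*(1 - A1 \<bullet> Y/s\<^sup>2) + t*(1 - A2 \<bullet> Y/s\<^sup>2))"
    by (simp only: Bf_def eq)
  also have "\<dots> = gam s (norm ((1-t) *\<^sub>R A1 + t *\<^sub>R A2)) *
     ((1-t)/gam s (norm A1) * Bf s A1 Y + t/gam s (norm A2) * Bf s A2 Y)"
    unfolding Bf_def using g1 g2 by (simp add: field_simps)
  finally show ?thesis .
qed

lemma chord:
  fixes A1 A2 C P :: "'a::real_inner"
  assumes s: "s > 0" and a1: "norm A1 < s" and a2: "norm A2 < s" and cc: "norm C < s"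
    and p: "norm P < s" and t0: "0 \<le> t" and t1: "t \<le> 1" and P: "P = (1-t) *\<^sub>R A1 + t *\<^sub>R A2"
    and k1: "Bf s C A1 = k" and k2: "Bf s C A2 = k"
  shows "gam s (gyrodist s P A1) * gyrodist s P A1 * (gam s (gyrodist s P A2) * gyrodist s P A2)
           / (gam s (gyrodist s A1 A2) + 1) = s\<^sup>2 * (1 - (Bf s C P)\<^sup>2 / k\<^sup>2) / 2"
proof -
  define l where "l = gam s (norm P)"
  define al where "al = (1-t)/gam s (norm A1)"
  define be where "be = t/gam s (norm A2)"
  define c where "c = Bf s A1 A2"
  have l0: "l > 0" unfolding l_def using G_pos[OF s p] by simp
  have al0: "al \<ge> 0" unfolding al_def using G_pos[OF s a1] t1 by simp
  have be0: "be \<ge> 0" unfolding be_def using G_pos[OF s a2] t0 by simp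
  have c1: "c \<ge> 1" unfolding c_def using Bf_ge1[OF s a1 a2] .
  have k1': "k \<ge> 1" using Bf_ge1[OF s cc a1] k1 by simp
  have lin: "\<And>Y. Bf s P Y = l * (al * Bf s A1 Y + be * Bf s A2 Y)"
    unfolding P l_def al_def be_def using Bf_lin[OF s a1 a2] by blast
  have sym: "\<And>X Y::'a. Bf s X Y = Bf s Y X" unfolding Bf_def by (simp add: inner_commute)
  define p1 where "p1 = Bf s P A1"
  define p2 where "p2 = Bf s P A2"
  have p1: "p1 = l*(al + be*c)" unfolding p1_def lin c_def by (simp add: Bf_self[OF s a1] sym[of A2 A1])
  have p2: "p2 = l*(al*c + be)" unfolding p2_def lin c_def by (simp add: Bf_self[OF s a2] sym[of A1 A2])
  have one: "1 = l*(al*p1 + be*p2)" using lin[of P] Bf_self[OF s p] sym unfolding p1_def p2_def by metis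
  hence one': "l\<^sup>2*(al\<^sup>2 + 2*al*be*c + be\<^sup>2) = 1" unfolding p1 p2 by (simp add: power2_eq_square algebra_simps)
  have q: "Bf s C P = l*(al+be)*k" using lin[of C] sym k1 k2 by (metis distrib_left mult.commute mult.assoc)
  have dA1: "gam s (gyrodist s P A1) = p1" "gyrodist s P A1 < s" using gyro_gam[OF s p a1] p1_def by auto
  have dA2: "gam s (gyrodist s P A2) = p2" "gyrodist s P A2 < s" using gyro_gam[OF s p a2] p2_def by auto
  have dA: "gam s (gyrodist s A1 A2) = c" using gyro_gam[OF s a1 a2] c_def by auto
  have e1: "gam s (gyrodist s P A1) * gyrodist s P A1 = s * sqrt (p1\<^sup>2 - 1)"
    using gam_times[OF s _ dA1(2)] dA1(1) unfolding gyrodist_def by simp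
  have e2: "gam s (gyrodist s P A2) * gyrodist s P A2 = s * sqrt (p2\<^sup>2 - 1)"
    using gam_times[OF s _ dA2(2)] dA2(1) unfolding gyrodist_def by simp
  have "p1\<^sup>2 - 1 = (l*be)\<^sup>2 * (c\<^sup>2 - 1)" unfolding p1 using one'
    by (simp add: power2_eq_square algebra_simps) 
  hence s1: "sqrt (p1\<^sup>2 - 1) = l*be * sqrt (c\<^sup>2 - 1)" using l0 be0 by (simp add: real_sqrt_mult)
  have "p2\<^sup>2 - 1 = (l*al)\<^sup>2 * (c\<^sup>2 - 1)" unfolding p2 using one'
    by (simp add: power2_eq_square algebra_simps)
  hence s2: "sqrt (p2\<^sup>2 - 1) = l*al * sqrt (c\<^sup>2 - 1)" using l0 al0 by (simp add: real_sqrt_mult)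
  have cs: "sqrt (c\<^sup>2 - 1) * sqrt (c\<^sup>2 - 1) = (c-1)*(c+1)" proof -
    have "c\<^sup>2 - 1 \<ge> 0" using c1 by (simp add: one_le_power)
    thus ?thesis by (simp add: power2_eq_square algebra_simps)
  qed
  have "gam s (gyrodist s P A1) * gyrodist s P A1 * (gam s (gyrodist s P A2) * gyrodist s P A2)
           / (gam s (gyrodist s A1 A2) + 1) = s\<^sup>2 * l\<^sup>2 * al * be * (c - 1)"
    unfolding e1 e2 s1 s2 dA using cs c1 by (simp add: field_simps power2_eq_square)
  also have "\<dots> = s\<^sup>2 * (1 - (Bf s C P)\<^sup>2 / k\<^sup>2) / 2"
  proof -
    have kk: "(l*(al+be)*k)\<^sup>2/k\<^sup>2 = l\<^sup>2*(al+be)\<^sup>2" using k1' by (simp add: power_mult_distrib)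
    have "1 - l\<^sup>2*(al+be)\<^sup>2 = l\<^sup>2*(al\<^sup>2 + 2*al*be*c + be\<^sup>2) - l\<^sup>2*(al+be)\<^sup>2" using one' by simp
    also have "\<dots> = 2 * l\<^sup>2 * al * be * (c - 1)" by (simp add: power2_eq_square algebra_simps)
    finally show ?thesis unfolding q kk by simp
  qed
  finally show ?thesis .
qed

theorem mainTheorem6:
  fixes s r :: real and S :: "(real ^ 'n) set"
    and C A1 A2 B1 B2 P :: "real ^ 'n"
  assumes "CARD('n) \<ge> 2" and "s > 0"
    and "is_gyroplane s S" and "C \<in> S" and "r > 0"
    and "A1 \<in> gyrocircle s S C r" and "A2 \<in> gyrocircle s S C r"
    and "B1 \<in> gyrocircle s S C r" and "B2 \<in> gyrocircle s S C r"
    and "A1 \<noteq> A2" and "B1 \<noteq> B2"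
    and "P \<in> closed_segment A1 A2" and "P \<in> closed_segment B1 B2"
  shows "gam s (gyrodist s P A1) * gyrodist s P A1 * (gam s (gyrodist s P A2) * gyrodist s P A2)
           / (gam s (gyrodist s A1 A2) + 1)
       = gam s (gyrodist s P B1) * gyrodist s P B1 * (gam s (gyrodist s P B2) * gyrodist s P B2)
           / (gam s (gyrodist s B1 B2) + 1)"
proof -
  note s = assms(2)
  have Sb: "S \<subseteq> ball 0 s" using assms(3) unfolding is_gyroplane_def gyroplane_def by auto
  have inb: "\<And>X. X \<in> gyrocircle s S C r \<Longrightarrow> norm X < s \<and> gyrodist s C X = r"
    using Sb unfolding gyrocircle_def by auto
  have c: "norm C < s" using assms(4) Sb by auto
  have kk: "\<And>X. X \<in> gyrocircle s S C r \<Longrightarrow> Bf s C X = gam s r"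
    using gyro_gam(2)[OF s c] inb by metis
  have a1: "norm A1 < s" and a2: "norm A2 < s" and b1: "norm B1 < s" and b2: "norm B2 < s"
    using inb assms(6-9) by auto
  have cb: "convex (ball (0::real^'n) s)" by (rule convex_ball)
  have pA: "P \<in> ball 0 s" proof -
    have "closed_segment A1 A2 \<subseteq> ball 0 s" using a1 a2 by (intro closed_segment_subset[OF _ _ cb]) auto
    thus ?thesis using assms(12) by blast
  qed
  hence p: "norm P < s" by simp
  obtain t where t: "0 \<le> t" "t \<le> 1" "P = (1-t) *\<^sub>R A1 + t *\<^sub>R A2"
    using assms(12) unfolding closed_segment_def by auto
  obtain u where u: "0 \<le> u" "u \<le> 1" "P = (1-u) *\<^sub>R B1 + u *\<^sub>R B2"
    using assms(13) unfolding closed_segment_def by auto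
  show ?thesis
    using chord[OF s a1 a2 c p t kk[OF assms(6)] kk[OF assms(7)]]
          chord[OF s b1 b2 c p u kk[OF assms(8)] kk[OF assms(9)]] by (simp only:)
qed

end
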